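(* Let $f=(z,u_0)\in\mathcal Y'$ and $\widehat u\in\mathcal X$. Then for all $\boldsymbol y\in U$ and $\boldsymbol\nu\in\mathscr F$, $$|\partial^{\boldsymbol\nu}_{\boldsymbol y}\Phi^{\boldsymbol y}|\le\frac{\alpha_1+\alpha_2\|E_T\|^2_{\mathcal X\to L^2(D)}}{2}\Big(\frac{\|f\|_{\mathcal Y'}}{\beta_1}+\|\widehat u\|_{\mathcal X}\Big)^2(|\boldsymbol\nu|+1)!\,\boldsymbol b^{\boldsymbol\nu}.$$
   Context: Setting. $D\subset\mathbb R^d$ ($d\in\{1,2,3\}$) is a bounded Lipschitz domain, $I=[0,T]$ with $0<T<\infty$, and $U=[-\frac12,\frac12]^{\mathbb N}$. The diffusion coefficient is $a^{\boldsymbol y}(\boldsymbol x,t)=a_0(\boldsymbol x,t)+\sum_{j\ge1}y_j\psi_j(\boldsymbol x,t)$, where for a.e. $t\in I$, $a_0(\cdot,t),\psi_j(\cdot,t)\in L^\infty(D)$, $(\sup_{t\in I}\|\psi_j(\cdot,t)\|_{L^\infty(D)})_{j\ge1}\in\ell^1$, $t\mapsto a^{\boldsymbol y}(\boldsymbol x,t)$ is measurable, and there are constants $0<a_{\min}\le a_{\max}<\infty$ with $a_{\min}\le a^{\boldsymbol y}(\boldsymbol x,t)\le a_{\max}$ for all $\boldsymbol x\in D$, $\boldsymbol y\in U$, a.e. $t\in I$. $V=H^1_0(D)$ with $\langle v_1,v_2\rangle_V=\langle\nabla v_1,\nabla v_2\rangle_{L^2(D)}$, $V'=H^{-1}(D)$.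 $\mathcal X=\{v\in L^2(V;I):\partial_tv\in L^2(V';I)\}$ with $\|v\|_{\mathcal X}^2=\|v\|^2_{L^2(V;I)}+\|\partial_tv\|^2_{L^2(V';I)}$; $\mathcal Y'=L^2(V';I)\times L^2(D)$ with the product norm. For $\boldsymbol y\in U$ the operator $B^{\boldsymbol y}:\mathcal X\to\mathcal Y'$ is defined by $\langle B^{\boldsymbol y}w,(v_1,v_2)\rangle=\int_I\langle\partial_tw,v_1\rangle_{V',V}\,\mathrm dt+\int_I\int_Da^{\boldsymbol y}\nabla w\cdot\nabla v_1\,\mathrm d\boldsymbol x\,\mathrm dt+\int_Dw(\cdot,0)v_2\,\mathrm d\boldsymbol x$ for $(v_1,v_2)\in L^2(V;I)\times L^2(D)$. Each $B^{\boldsymbol y}$ is an isomorphism and there is $\beta_1>0$ with $\sup_{\boldsymbol y\in U}\|(B^{\boldsymbol y})^{-1}\|_{\mathcal Y'\to\mathcal X}\le1/\beta_1$. For $f=(z,u_0)\in\mathcal Y'$ the state is $u^{\boldsymbol y}=(B^{\boldsymbol y})^{-1}f\in\mathcal X$. $E_T:\mathcal X\to L^2(D)$, $v\mapsto v(\cdot,T)$, is bounded. $b_j=\beta_1^{-1}\sup_{t\in I}\|\psi_j(\cdot,t)\|_{L^\infty(D)}$; $\mathscr F$ is the set of finitely supported multi-indices, $|\boldsymbol\nu|=\sum_j\nu_j$, $\boldsymbol b^{\boldsymbol\nu}=\prod_jb_j^{\nu_j}$, $\partial^{\boldsymbol\nu}_{\boldsymbol y}=\prod_j(\partial/\partial y_j)^{\nu_j}$.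 It is known that $\|\partial^{\boldsymbol\nu}_{\boldsymbol y}u^{\boldsymbol y}\|_{\mathcal X}\le\frac{\|f\|_{\mathcal Y'}}{\beta_1}|\boldsymbol\nu|!\,\boldsymbol b^{\boldsymbol\nu}$. Fix $\alpha_1,\alpha_2\ge0$ with $\alpha_1+\alpha_2>0$ and let $\Phi^{\boldsymbol y}:=\frac{\alpha_1}{2}\|u^{\boldsymbol y}-\widehat u\|^2_{L^2(V;I)}+\frac{\alpha_2}{2}\|E_T(u^{\boldsymbol y}-\widehat u)\|^2_{L^2(D)}$. *)

theory Defs
  imports "HOL-Analysis.Analysis"
begin

definition Upar :: "(nat \<Rightarrow> real) set" where
  "Upar = {y. \<forall>j. y j \<in> {-1/2..1/2}}"

definition Fidx :: "(nat \<Rightarrow> nat) set" where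
  "Fidx = {\<nu>. finite {j. \<nu> j \<noteq> 0}}"

definition mi_abs :: "(nat \<Rightarrow> nat) \<Rightarrow> nat" where
  "mi_abs \<nu> = (\<Sum>j\<in>{j. \<nu> j \<noteq> 0}. \<nu> j)"

definition mi_pow :: "(nat \<Rightarrow> real) \<Rightarrow> (nat \<Rightarrow> nat) \<Rightarrow> real" where
  "mi_pow b \<nu> = (\<Prod>j\<in>{j. \<nu> j \<noteq> 0}. b j ^ \<nu> j)"

definition pdiff :: "nat \<Rightarrow> ((nat \<Rightarrow> real) \<Rightarrow> 'a::real_normed_vector) \<Rightarrow> (nat \<Rightarrow> real) \<Rightarrow> 'a" where
  "pdiff j F y = vector_derivative (\<lambda>h. F (y(j := y j + h)))
      (at 0 within {h. y(j := y j + h) \<in> Upar})"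

definition mixed_deriv :: "(nat \<Rightarrow> nat) \<Rightarrow> ((nat \<Rightarrow> real) \<Rightarrow> 'a::real_normed_vector) \<Rightarrow> (nat \<Rightarrow> real) \<Rightarrow> 'a" where
  "mixed_deriv \<nu> F = fold (\<lambda>j G. (pdiff j ^^ \<nu> j) G) (sorted_list_of_set {j. \<nu> j \<noteq> 0}) F"

end

theory Submission
  imports Defs
begin


lemma mi_abs_sup: "finite B \<Longrightarrow> {j. m j \<noteq> 0} \<subseteq> B \<Longrightarrow> mi_abs m = (\<Sum>j\<in>B. m j)"
  unfolding mi_abs_def by (rule sum.mono_neutral_left) auto

lemma mi_pow_sup: "finite B \<Longrightarrow> {j. m j \<noteq> 0} \<subseteq> B \<Longrightarrow> mi_pow b m = (\<Prod>j\<in>B. b j ^ m j)"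
  unfolding mi_pow_def by (rule prod.mono_neutral_left) auto

lemma Fidx_inc: "m \<in> Fidx \<Longrightarrow> m(J := Suc (m J)) \<in> Fidx"
  unfolding Fidx_def by (auto intro: finite_subset[of _ "insert J {j. m j \<noteq> 0}"])

lemma mi_abs_inc: assumes "m \<in> Fidx" shows "mi_abs (m(J := Suc (m J))) = Suc (mi_abs m)"
proof -
  define B where "B = insert J {j. m j \<noteq> 0}"
  have fB: "finite B" using assms by (simp add: B_def Fidx_def)
  have JB: "J \<in> B" by (simp add: B_def)
  have "mi_abs (m(J := Suc (m J))) = (\<Sum>j\<in>B. (m(J := Suc (m J))) j)"
    by (rule mi_abs_sup[OF fB]) (auto simp: B_def)
  also have "\<dots> = Suc (m J) + (\<Sum>j\<in>B-{J}. (m(J := Suc (m J))) j)"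
    using sum.remove[OF fB JB, of "m(J := Suc (m J))"] by (simp add: fun_upd_same del: fun_upd_apply)
  also have "(\<Sum>j\<in>B-{J}. (m(J := Suc (m J))) j) = (\<Sum>j\<in>B-{J}. m j)"
    by (rule sum.cong) auto
  also have "Suc (m J) + (\<Sum>j\<in>B-{J}. m j) = Suc (m J + (\<Sum>j\<in>B-{J}. m j))" by simp
  also have "m J + (\<Sum>j\<in>B-{J}. m j) = (\<Sum>j\<in>B. m j)"
    using sum.remove[OF fB JB, of m] by simp
  also have "\<dots> = mi_abs m"
    by (rule mi_abs_sup[OF fB, symmetric]) (auto simp: B_def)
  finally show ?thesis .
qed

lemma mi_pow_inc: assumes "m \<in> Fidx" shows "mi_pow b (m(J := Suc (m J))) = b J * mi_pow b m"
proof -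
  define B where "B = insert J {j. m j \<noteq> 0}"
  have fB: "finite B" using assms by (simp add: B_def Fidx_def)
  have JB: "J \<in> B" by (simp add: B_def)
  have "mi_pow b (m(J := Suc (m J))) = (\<Prod>j\<in>B. b j ^ (m(J := Suc (m J))) j)"
    by (rule mi_pow_sup[OF fB]) (auto simp: B_def)
  also have "\<dots> = b J ^ Suc (m J) * (\<Prod>j\<in>B-{J}. b j ^ (m(J := Suc (m J))) j)"
    using prod.remove[OF fB JB, of "\<lambda>j. b j ^ (m(J := Suc (m J))) j"] by (simp add: fun_upd_same del: fun_upd_apply)
  also have "(\<Prod>j\<in>B-{J}. b j ^ (m(J := Suc (m J))) j) = (\<Prod>j\<in>B-{J}. b j ^ m j)"
    by (rule prod.cong) auto
  also have "b J ^ Suc (m J) * (\<Prod>j\<in>B-{J}. b j ^ m j) = b J * (b J ^ m J * (\<Prod>j\<in>B-{J}. b j ^ m j))" by simp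
  also have "b J ^ m J * (\<Prod>j\<in>B-{J}. b j ^ m j) = (\<Prod>j\<in>B. b j ^ m j)"
    using prod.remove[OF fB JB, of "\<lambda>j. b j ^ m j"] by simp
  also have "\<dots> = mi_pow b m"
    by (rule mi_pow_sup[OF fB, symmetric]) (auto simp: B_def)
  finally show ?thesis .
qed

definition cnt :: "(nat \<Rightarrow> nat) \<Rightarrow> nat set \<Rightarrow> nat \<Rightarrow> nat" where
  "cnt \<sigma> S j = card {i\<in>S. \<sigma> i = j}"

lemma cnt_empty[simp]: "cnt \<sigma> {} = (\<lambda>_. 0)"
  by (simp add: cnt_def fun_eq_iff)

lemma cnt_insert: assumes "finite S" "i \<notin> S"
  shows "cnt \<sigma> (insert i S) = (cnt \<sigma> S)(\<sigma> i := Suc (cnt \<sigma> S (\<sigma> i)))"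
proof (rule ext)
  fix j
  show "cnt \<sigma> (insert i S) j = ((cnt \<sigma> S)(\<sigma> i := Suc (cnt \<sigma> S (\<sigma> i)))) j"
  proof (cases "\<sigma> i = j")
    case True
    have "cnt \<sigma> (insert i S) j = card (insert i {k\<in>S. \<sigma> k = j})"
      unfolding cnt_def using True by (intro arg_cong[where f=card]) auto
    also have "\<dots> = Suc (card {k\<in>S. \<sigma> k = j})"
      using assms by (intro card_insert_disjoint) auto
    also have "\<dots> = Suc (cnt \<sigma> S j)" by (simp only: cnt_def)
    also have "\<dots> = ((cnt \<sigma> S)(\<sigma> i := Suc (cnt \<sigma> S (\<sigma> i)))) j"
      using True by (simp only: fun_upd_same)
    finally show ?thesis .
  next
    case False
    have "cnt \<sigma> (insert i S) j = card {k\<in>S. \<sigma> k = j}"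
      unfolding cnt_def using False by (intro arg_cong[where f=card]) auto
    also have "\<dots> = cnt \<sigma> S j" by (simp only: cnt_def)
    also have "\<dots> = ((cnt \<sigma> S)(\<sigma> i := Suc (cnt \<sigma> S (\<sigma> i)))) j"
      using False by (simp only: fun_upd_other)
    finally show ?thesis .
  qed
qed

lemma cnt_Fidx: assumes fS: "finite S" shows "cnt \<sigma> S \<in> Fidx"
proof -
  have "{j. cnt \<sigma> S j \<noteq> 0} \<subseteq> \<sigma> ` S"
  proof
    fix j assume "j \<in> {j. cnt \<sigma> S j \<noteq> 0}"
    then have "card {i\<in>S. \<sigma> i = j} \<noteq> 0" by (simp add: cnt_def)
    then have "{i\<in>S. \<sigma> i = j} \<noteq> {}" by (metis card.empty)
    then show "j \<in> \<sigma> ` S" by blast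
  qed
  then show ?thesis unfolding Fidx_def using finite_subset[OF _ finite_imageI[OF fS]] by blast
qed

lemma cnt_abs: "finite S \<Longrightarrow> mi_abs (cnt \<sigma> S) = card S"
proof (induction S rule: finite_induct)
  case empty then show ?case by (simp add: mi_abs_def)
next
  case (insert i S) then show ?case by (simp add: cnt_insert mi_abs_inc cnt_Fidx del: fun_upd_apply)
qed

lemma cnt_pow: "finite S \<Longrightarrow> mi_pow b (cnt \<sigma> S) = (\<Prod>i\<in>S. b (\<sigma> i))"
proof (induction S rule: finite_induct)
  case empty then show ?case by (simp add: mi_pow_def)
next
  case (insert i S) then show ?case by (simp add: cnt_insert mi_pow_inc cnt_Fidx del: fun_upd_apply)
qed

lemma cnt_cong: "(\<And>i. i \<in> S \<Longrightarrow> \<sigma> i = \<tau> i) \<Longrightarrow> cnt \<sigma> S = cnt \<tau> S"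
  unfolding cnt_def by (intro ext arg_cong[where f=card]) auto

lemma sum_fact_pow: assumes "finite A"
  shows "(\<Sum>S\<in>Pow A. fact (card S) * fact (card A - card S) :: real) = fact (Suc (card A))"
proof -
  let ?n = "card A"
  let ?h = "\<lambda>S. fact (card S) * fact (?n - card S) :: real"
  have "(\<Sum>S\<in>Pow A. ?h S) = (\<Sum>k\<in>{..?n}. sum ?h {S\<in>Pow A. card S = k})"
    by (rule sum.group[symmetric]) (auto simp: assms card_mono)
  also have "\<dots> = (\<Sum>k\<in>{..?n}. fact ?n)"
  proof (rule sum.cong)
    fix k assume k: "k \<in> {..?n}"
    have "sum ?h {S\<in>Pow A. card S = k} = sum (\<lambda>S. fact k * fact (?n - k)) {S\<in>Pow A. card S = k}"
      by (rule sum.cong) auto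
    also have "\<dots> = real (card {S\<in>Pow A. card S = k}) * (fact k * fact (?n - k))" by simp
    also have "card {S\<in>Pow A. card S = k} = ?n choose k"
    proof -
      have "{S\<in>Pow A. card S = k} = {B. B \<subseteq> A \<and> card B = k}" by auto
      then show ?thesis using n_subsets[OF assms] by simp
    qed
    also have "real (?n choose k) * (fact k * fact (?n - k)) = real (fact k * fact (?n - k) * (?n choose k))"
      by (simp add: of_nat_fact)
    also have "fact k * fact (?n - k) * (?n choose k) = (fact ?n :: nat)"
      using binomial_fact_lemma k by simp
    finally show "sum ?h {S\<in>Pow A. card S = k} = fact ?n" by (simp add: of_nat_fact)
  qed simp
  also have "\<dots> = fact (Suc ?n)" by (simp add: algebra_simps)
  finally show ?thesis .
qed

lemma sorted_max: assumes "finite A" "A \<noteq> {}"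
  shows "sorted_list_of_set A = sorted_list_of_set (A - {Max A}) @ [Max A :: nat]"
proof -
  let ?l = "sorted_list_of_set (A - {Max A}) @ [Max A]"
  have fin: "finite (A - {Max A})" using assms by simp
  have MA: "Max A \<in> A" using assms by simp
  have lt: "\<forall>x\<in>set (sorted_list_of_set (A - {Max A})). x < Max A"
    using fin assms by (auto simp: less_le)
  have "sorted_wrt (<) ?l"
    unfolding sorted_wrt_append using lt by (simp add: strict_sorted_list_of_set)
  moreover have "set ?l = A" using fin MA by auto
  moreover have "card A > 0" using assms by (simp add: card_gt_0_iff)
  then have "length ?l = card A" using fin MA assms
    by (simp add: card_Diff_singleton)
  ultimately show ?thesis using sorted_list_of_set_unique[OF assms(1)] by blast
qed

lemma md_zero: "mixed_deriv (\<lambda>_. 0) F = F"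
  by (simp add: mixed_deriv_def)

lemma md_step:
  assumes nu: "\<nu> \<in> Fidx" and ne: "{j. \<nu> j \<noteq> 0} \<noteq> {}" and J: "J = Max {j. \<nu> j \<noteq> 0}"
  shows "mixed_deriv \<nu> F = pdiff J (mixed_deriv (\<nu>(J := \<nu> J - 1)) F)"
proof -
  define P where "P = {j. \<nu> j \<noteq> 0}"
  define \<nu>' where "\<nu>' = \<nu>(J := \<nu> J - 1)"
  define L0 where "L0 = sorted_list_of_set (P - {J})"
  have fP: "finite P" using nu by (simp add: P_def Fidx_def)
  have JP: "J \<in> P" unfolding J P_def by (rule Max_in) (use fP ne in \<open>auto simp: P_def\<close>)
  have L: "sorted_list_of_set P = L0 @ [J]"
    using sorted_max[OF fP] ne J by (simp add: P_def L0_def)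
  have setL0: "set L0 = P - {J}" using fP by (simp add: L0_def)
  let ?g = "\<lambda>j G. (pdiff j ^^ \<nu> j) G"
  let ?g' = "\<lambda>j G. (pdiff j ^^ \<nu>' j) G"
  have fe: "fold ?g L0 F = fold ?g' L0 F"
    by (rule fold_cong) (auto simp: setL0 \<nu>'_def)
  have md: "mixed_deriv \<nu> F = (pdiff J ^^ \<nu> J) (fold ?g L0 F)"
    unfolding mixed_deriv_def P_def[symmetric] L by simp
  have pos: "\<nu> J \<noteq> 0" using JP by (simp add: P_def)
  have fold_eq: "fold ?g L0 F = fold ?g' L0 F" by (rule fe)
  show ?thesis
  proof (cases "\<nu> J = 1")
    case True
    have "{j. \<nu>' j \<noteq> 0} = P - {J}" using True by (auto simp: \<nu>'_def P_def)
    then have A: "mixed_deriv \<nu>' F = fold ?g' L0 F"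
      unfolding mixed_deriv_def by (simp add: L0_def)
    have "mixed_deriv \<nu> F = (pdiff J ^^ 1) (fold ?g L0 F)" using md True by simp
    also have "\<dots> = pdiff J (fold ?g' L0 F)" using fold_eq by simp
    also have "\<dots> = pdiff J (mixed_deriv \<nu>' F)" using A by simp
    finally show ?thesis unfolding \<nu>'_def .
  next
    case False
    have "{j. \<nu>' j \<noteq> 0} = P" using False pos by (auto simp: \<nu>'_def P_def)
    then have A: "mixed_deriv \<nu>' F = (pdiff J ^^ \<nu>' J) (fold ?g' L0 F)"
      unfolding mixed_deriv_def by (simp add: L)
    have S: "\<nu> J = Suc (\<nu>' J)" using pos by (simp add: \<nu>'_def)
    have "mixed_deriv \<nu> F = (pdiff J ^^ Suc (\<nu>' J)) (fold ?g L0 F)" using md S by simp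
    also have "\<dots> = pdiff J ((pdiff J ^^ \<nu>' J) (fold ?g' L0 F))" using fold_eq by simp
    also have "\<dots> = pdiff J (mixed_deriv \<nu>' F)" using A by simp
    finally show ?thesis unfolding \<nu>'_def .
  qed
qed



lemma hvd_inner:
  assumes "(f has_vector_derivative f') (at x within s)" "(g has_vector_derivative g') (at x within s)"
  shows "((\<lambda>x. f x \<bullet> g x) has_vector_derivative (f x \<bullet> g' + f' \<bullet> g x)) (at x within s)"
proof -
  have "((\<lambda>x. f x \<bullet> g x) has_derivative (\<lambda>h. f x \<bullet> (h *\<^sub>R g') + (h *\<^sub>R f') \<bullet> g x)) (at x within s)"
    by (rule has_derivative_inner[OF assms[unfolded has_vector_derivative_def]])
  moreover have "(\<lambda>h. f x \<bullet> (h *\<^sub>R g') + (h *\<^sub>R f') \<bullet> g x) = (\<lambda>h. h *\<^sub>R (f x \<bullet> g' + f' \<bullet> g x))"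
    by (simp add: algebra_simps)
  ultimately show ?thesis unfolding has_vector_derivative_def by simp
qed

lemma Upar_line: assumes "y \<in> Upar"
  shows "{h. y(J := y J + h) \<in> Upar} = {-1/2 - y J .. 1/2 - y J}"
  using assms unfolding Upar_def by (auto simp: fun_upd_def split: if_splits)

lemma pdiff_eval:
  fixes \<Psi> :: "(nat \<Rightarrow> real) \<Rightarrow> 'a::real_normed_vector"
  assumes y: "y \<in> Upar"
    and eq: "\<And>h. y(J := y J + h) \<in> Upar \<Longrightarrow> \<Psi> (y(J := y J + h)) = R h"
    and d: "(R has_vector_derivative R') (at 0 within {h. y(J := y J + h) \<in> Upar})"
  shows "pdiff J \<Psi> y = R'"
proof -
  define a where "a = -1/2 - y J"
  define b where "b = 1/2 - y J"
  have T: "{h. y(J := y J + h) \<in> Upar} = cbox a b"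
    unfolding Upar_line[OF y] a_def b_def box_real by simp
  have yJ: "y J \<in> {-1/2..1/2}" using y unfolding Upar_def by simp
  have ab: "a < b" by (simp add: a_def b_def)
  have 0: "0 \<in> cbox a b" using yJ by (simp add: a_def b_def box_real)
  have "((\<lambda>h. \<Psi> (y(J := y J + h))) has_vector_derivative R') (at 0 within cbox a b)"
  proof (rule has_vector_derivative_transform_within[where d=1])
    show "(R has_vector_derivative R') (at 0 within cbox a b)" using d T by simp
    show "(0::real) < 1" by simp
    show "(0::real) \<in> cbox a b" by (rule 0)
    fix x' assume "x' \<in> cbox a b" "dist x' 0 < 1"
    then have "y(J := y J + x') \<in> Upar" using T by (metis (no_types, lifting) mem_Collect_eq)
    then show "R x' = \<Psi> (y(J := y J + x'))" using eq by simp
  qed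
  then show ?thesis unfolding pdiff_def T using vector_derivative_within_cbox[OF ab 0] by blast
qed

lemma sum_Pow_insert:
  assumes "finite A" "k \<notin> A"
  shows "sum F (Pow (insert k A)) = sum F (Pow A) + sum (\<lambda>S. F (insert k S)) (Pow A)"
proof -
  have inj: "inj_on (insert k) (Pow A)"
  proof (rule inj_onI)
    fix S S' assume "S \<in> Pow A" "S' \<in> Pow A" "insert k S = insert k S'"
    then have "insert k S - {k} = insert k S' - {k}" by simp
    then show "S = S'" using \<open>S \<in> Pow A\<close> \<open>S' \<in> Pow A\<close> assms(2) by auto
  qed
  have disj: "Pow A \<inter> insert k ` Pow A = {}" using assms(2) by auto
  have "sum F (Pow (insert k A)) = sum F (Pow A \<union> insert k ` Pow A)" by (simp add: Pow_insert)
  also have "\<dots> = sum F (Pow A) + sum F (insert k ` Pow A)"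
    by (rule sum.union_disjoint) (use assms disj in auto)
  also have "sum F (insert k ` Pow A) = sum (\<lambda>S. F (insert k S)) (Pow A)"
    by (simp add: sum.reindex[OF inj])
  finally show ?thesis .
qed

locale stp =
  fixes u :: "(nat \<Rightarrow> real) \<Rightarrow> 'x::real_normed_vector" and uhat :: 'x
    and Lv :: "'x \<Rightarrow> 'h1::real_inner" and ET :: "'x \<Rightarrow> 'h2::real_inner" and a1 a2 :: real
  assumes Lv: "bounded_linear Lv" and ET: "bounded_linear ET"
    and sm: "\<And>\<nu> j y. \<nu> \<in> Fidx \<Longrightarrow> y \<in> Upar \<Longrightarrow>
        ((\<lambda>h. mixed_deriv \<nu> u (y(j := y j + h))) has_vector_derivative
           mixed_deriv (\<nu>(j := Suc (\<nu> j))) u y)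
        (at 0 within {h. y(j := y j + h) \<in> Upar})"
begin

definition DD where "DD m y = mixed_deriv m u y - (if m = (\<lambda>_. 0) then uhat else 0)"
definition GG where "GG m1 m2 y = a1 / 2 * (Lv (DD m1 y) \<bullet> Lv (DD m2 y)) + a2 / 2 * (ET (DD m1 y) \<bullet> ET (DD m2 y))"
definition Phi where "Phi = (\<lambda>y'. a1 / 2 * norm (Lv (u y' - uhat)) ^ 2 + a2 / 2 * norm (ET (u y' - uhat)) ^ 2)"

lemma DD_der:
  assumes "m \<in> Fidx" "y \<in> Upar"
  shows "((\<lambda>h. DD m (y(J := y J + h))) has_vector_derivative DD (m(J := Suc (m J))) y)
           (at 0 within {h. y(J := y J + h) \<in> Upar})"
proof -
  have ne: "m(J := Suc (m J)) \<noteq> (\<lambda>_. 0)" by (metis fun_upd_same nat.distinct(1))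
  have "((\<lambda>h. mixed_deriv m u (y(J := y J + h)) - (if m = (\<lambda>_. 0) then uhat else 0)) has_vector_derivative
      mixed_deriv (m(J := Suc (m J))) u y - 0) (at 0 within {h. y(J := y J + h) \<in> Upar})"
    by (rule has_vector_derivative_diff[OF sm[OF assms] has_vector_derivative_const])
  then show ?thesis unfolding DD_def using ne by simp
qed

lemma GG_der:
  assumes "m1 \<in> Fidx" "m2 \<in> Fidx" "y \<in> Upar"
  shows "((\<lambda>h. GG m1 m2 (y(J := y J + h))) has_vector_derivative
           GG (m1(J := Suc (m1 J))) m2 y + GG m1 (m2(J := Suc (m2 J))) y)
           (at 0 within {h. y(J := y J + h) \<in> Upar})"
proof -
  let ?F = "at 0 within {h. y(J := y J + h) \<in> Upar}"
  note d1 = DD_der[OF assms(1,3), of J] and d2 = DD_der[OF assms(2,3), of J]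
  have L: "((\<lambda>h. Lv (DD m1 (y(J := y J + h))) \<bullet> Lv (DD m2 (y(J := y J + h)))) has_vector_derivative
      (Lv (DD m1 (y(J := y J + 0))) \<bullet> Lv (DD (m2(J := Suc (m2 J))) y) + Lv (DD (m1(J := Suc (m1 J))) y) \<bullet> Lv (DD m2 (y(J := y J + 0))))) ?F"
    by (rule hvd_inner[OF bounded_linear.has_vector_derivative[OF Lv d1] bounded_linear.has_vector_derivative[OF Lv d2]])
  have E: "((\<lambda>h. ET (DD m1 (y(J := y J + h))) \<bullet> ET (DD m2 (y(J := y J + h)))) has_vector_derivative
      (ET (DD m1 (y(J := y J + 0))) \<bullet> ET (DD (m2(J := Suc (m2 J))) y) + ET (DD (m1(J := Suc (m1 J))) y) \<bullet> ET (DD m2 (y(J := y J + 0))))) ?F"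
    by (rule hvd_inner[OF bounded_linear.has_vector_derivative[OF ET d1] bounded_linear.has_vector_derivative[OF ET d2]])
  have "((\<lambda>h. GG m1 m2 (y(J := y J + h))) has_vector_derivative
      a1 / 2 * (Lv (DD m1 (y(J := y J + 0))) \<bullet> Lv (DD (m2(J := Suc (m2 J))) y) + Lv (DD (m1(J := Suc (m1 J))) y) \<bullet> Lv (DD m2 (y(J := y J + 0))))
    + a2 / 2 * (ET (DD m1 (y(J := y J + 0))) \<bullet> ET (DD (m2(J := Suc (m2 J))) y) + ET (DD (m1(J := Suc (m1 J))) y) \<bullet> ET (DD m2 (y(J := y J + 0))))) ?F"
    unfolding GG_def
    by (rule has_vector_derivative_add[OF has_vector_derivative_mult_right[OF L] has_vector_derivative_mult_right[OF E]])
  then show ?thesis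
    by (rule has_vector_derivative_eq_rhs) (simp add: GG_def algebra_simps)
qed

lemma mi_abs_zero: assumes "\<nu> \<in> Fidx" "mi_abs \<nu> = 0" shows "\<nu> = (\<lambda>_. 0)"
proof -
  have f: "finite {j. \<nu> j \<noteq> 0}" using assms(1) by (simp add: Fidx_def)
  have "\<forall>a\<in>{j. \<nu> j \<noteq> 0}. \<nu> a = 0" using assms(2) sum_eq_0_iff[OF f, of \<nu>] by (simp add: mi_abs_def)
  then show ?thesis by auto
qed

lemma rep:
  "\<forall>\<nu>. \<nu> \<in> Fidx \<longrightarrow> mi_abs \<nu> = n \<longrightarrow> (\<exists>\<sigma>. cnt \<sigma> {..<n} = \<nu> \<and>
      (\<forall>y\<in>Upar. mixed_deriv \<nu> Phi y = (\<Sum>S\<in>Pow {..<n}. GG (cnt \<sigma> S) (cnt \<sigma> ({..<n} - S)) y)))"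
proof (induction n)
  case 0
  show ?case
  proof (intro allI impI)
    fix \<nu> :: "nat \<Rightarrow> nat" assume "\<nu> \<in> Fidx" "mi_abs \<nu> = 0"
    then have z: "\<nu> = (\<lambda>_. 0)" by (rule mi_abs_zero)
    show "\<exists>\<sigma>. cnt \<sigma> {..<0} = \<nu> \<and>
      (\<forall>y\<in>Upar. mixed_deriv \<nu> Phi y = (\<Sum>S\<in>Pow {..<0}. GG (cnt \<sigma> S) (cnt \<sigma> ({..<0} - S)) y))"
    proof (intro exI conjI ballI)
      show "cnt (\<lambda>_. 0) {..<0} = \<nu>" using z by simp
      fix y :: "nat \<Rightarrow> real"
      show "mixed_deriv \<nu> Phi y = (\<Sum>S\<in>Pow {..<0}. GG (cnt (\<lambda>_. 0) S) (cnt (\<lambda>_. 0) ({..<0} - S)) y)"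
        using z by (simp add: md_zero GG_def DD_def Phi_def power2_norm_eq_inner)
    qed
  qed
next
  case (Suc k)
  show ?case
  proof (intro allI impI)
    fix \<nu> :: "nat \<Rightarrow> nat" assume nu: "\<nu> \<in> Fidx" and ab: "mi_abs \<nu> = Suc k"
    define P where "P = {j. \<nu> j \<noteq> 0}"
    have fP: "finite P" using nu by (simp add: P_def Fidx_def)
    have Pne: "P \<noteq> {}"
    proof
      assume "P = {}" then show False using ab unfolding mi_abs_def P_def[symmetric] by simp
    qed
    define J where "J = Max P"
    have JP: "J \<in> P" unfolding J_def using fP Pne by (rule Max_in)
    define \<nu>' where "\<nu>' = \<nu>(J := \<nu> J - 1)"
    have nuJ: "\<nu> J \<noteq> 0" using JP by (simp add: P_def)
    have nueq: "\<nu> = \<nu>'(J := Suc (\<nu>' J))" using nuJ by (auto simp: \<nu>'_def fun_eq_iff)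
    have nu': "\<nu>' \<in> Fidx" using nu unfolding Fidx_def \<nu>'_def
      by (auto intro: finite_subset[of _ "{j. \<nu> j \<noteq> 0}"])
    have ab': "mi_abs \<nu>' = k" using ab mi_abs_inc[OF nu', of J] nueq by simp
    obtain \<sigma>' where s1: "cnt \<sigma>' {..<k} = \<nu>'"
      and s2: "\<And>y. y \<in> Upar \<Longrightarrow> mixed_deriv \<nu>' Phi y = (\<Sum>S\<in>Pow {..<k}. GG (cnt \<sigma>' S) (cnt \<sigma>' ({..<k} - S)) y)"
      using Suc.IH nu' ab' by blast
    define \<sigma> where "\<sigma> = \<sigma>'(k := J)"
    define A where "A = {..<k::nat}"
    have fA: "finite A" and kA: "k \<notin> A" by (auto simp: A_def)
    have cs: "\<And>S. S \<subseteq> A \<Longrightarrow> cnt \<sigma> S = cnt \<sigma>' S"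
      by (rule cnt_cong) (auto simp: \<sigma>_def A_def)
    have ci: "\<And>S. S \<subseteq> A \<Longrightarrow> cnt \<sigma> (insert k S) = (cnt \<sigma>' S)(J := Suc (cnt \<sigma>' S J))"
    proof -
      fix S assume "S \<subseteq> A"
      then have "finite S" "k \<notin> S" using fA kA finite_subset by auto
      then show "cnt \<sigma> (insert k S) = (cnt \<sigma>' S)(J := Suc (cnt \<sigma>' S J))"
        using cnt_insert[of S k \<sigma>] cs[OF \<open>S \<subseteq> A\<close>] by (simp add: \<sigma>_def)
    qed
    have SucA: "{..<Suc k} = insert k A" by (auto simp: A_def)
    show "\<exists>\<sigma>. cnt \<sigma> {..<Suc k} = \<nu> \<and>
      (\<forall>y\<in>Upar. mixed_deriv \<nu> Phi y = (\<Sum>S\<in>Pow {..<Suc k}. GG (cnt \<sigma> S) (cnt \<sigma> ({..<Suc k} - S)) y))"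
    proof (intro exI conjI ballI)
      show "cnt \<sigma> {..<Suc k} = \<nu>" unfolding SucA using ci[of A] s1 nueq by (simp add: A_def)
      fix y :: "nat \<Rightarrow> real" assume y: "y \<in> Upar"
      define R where "R = (\<lambda>h. \<Sum>S\<in>Pow A. GG (cnt \<sigma>' S) (cnt \<sigma>' (A - S)) (y(J := y J + h)))"
      define R' where "R' = (\<Sum>S\<in>Pow A. GG ((cnt \<sigma>' S)(J := Suc (cnt \<sigma>' S J))) (cnt \<sigma>' (A - S)) y
                          + GG (cnt \<sigma>' S) ((cnt \<sigma>' (A - S))(J := Suc (cnt \<sigma>' (A - S) J))) y)"
      have md: "mixed_deriv \<nu> Phi y = pdiff J (mixed_deriv \<nu>' Phi) y"
        using md_step[OF nu, of J Phi] Pne by (simp add: J_def P_def \<nu>'_def)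
      have der: "(R has_vector_derivative R') (at 0 within {h. y(J := y J + h) \<in> Upar})"
        unfolding R_def R'_def
      proof (rule has_vector_derivative_sum)
        fix S assume "S \<in> Pow A"
        then have "finite S" "finite (A - S)" using fA finite_subset by auto
        then show "((\<lambda>h. GG (cnt \<sigma>' S) (cnt \<sigma>' (A - S)) (y(J := y J + h))) has_vector_derivative
          GG ((cnt \<sigma>' S)(J := Suc (cnt \<sigma>' S J))) (cnt \<sigma>' (A - S)) y
          + GG (cnt \<sigma>' S) ((cnt \<sigma>' (A - S))(J := Suc (cnt \<sigma>' (A - S) J))) y)
          (at 0 within {h. y(J := y J + h) \<in> Upar})"
          by (rule GG_der[OF cnt_Fidx cnt_Fidx y])
      qed
      have "pdiff J (mixed_deriv \<nu>' Phi) y = R'"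
        by (rule pdiff_eval[OF y _ der]) (simp add: s2 R_def A_def)
      also have "R' = (\<Sum>S\<in>Pow {..<Suc k}. GG (cnt \<sigma> S) (cnt \<sigma> ({..<Suc k} - S)) y)"
      proof -
        have "(\<Sum>S\<in>Pow {..<Suc k}. GG (cnt \<sigma> S) (cnt \<sigma> ({..<Suc k} - S)) y)
          = (\<Sum>S\<in>Pow A. GG (cnt \<sigma> S) (cnt \<sigma> (insert k A - S)) y)
            + (\<Sum>S\<in>Pow A. GG (cnt \<sigma> (insert k S)) (cnt \<sigma> (insert k A - insert k S)) y)"
          unfolding SucA by (rule sum_Pow_insert[OF fA kA])
        also have "(\<Sum>S\<in>Pow A. GG (cnt \<sigma> S) (cnt \<sigma> (insert k A - S)) y)
            = (\<Sum>S\<in>Pow A. GG (cnt \<sigma>' S) ((cnt \<sigma>' (A - S))(J := Suc (cnt \<sigma>' (A - S) J))) y)"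
        proof (rule sum.cong[OF refl])
          fix S assume S: "S \<in> Pow A"
          have "insert k A - S = insert k (A - S)" using S kA by auto
          then show "GG (cnt \<sigma> S) (cnt \<sigma> (insert k A - S)) y = GG (cnt \<sigma>' S) ((cnt \<sigma>' (A - S))(J := Suc (cnt \<sigma>' (A - S) J))) y"
            using cs[of S] ci[of "A - S"] S by auto
        qed
        also have "(\<Sum>S\<in>Pow A. GG (cnt \<sigma> (insert k S)) (cnt \<sigma> (insert k A - insert k S)) y)
            = (\<Sum>S\<in>Pow A. GG ((cnt \<sigma>' S)(J := Suc (cnt \<sigma>' S J))) (cnt \<sigma>' (A - S)) y)"
        proof (rule sum.cong[OF refl])
          fix S assume S: "S \<in> Pow A"
          have "insert k A - insert k S = A - S" using S kA by auto
          then show "GG (cnt \<sigma> (insert k S)) (cnt \<sigma> (insert k A - insert k S)) y = GG ((cnt \<sigma>' S)(J := Suc (cnt \<sigma>' S J))) (cnt \<sigma>' (A - S)) y"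
            using cs[of "A - S"] ci[of S] S by auto
        qed
        finally have X: "(\<Sum>S\<in>Pow {..<Suc k}. GG (cnt \<sigma> S) (cnt \<sigma> ({..<Suc k} - S)) y) =
          (\<Sum>S\<in>Pow A. GG (cnt \<sigma>' S) ((cnt \<sigma>' (A - S))(J := Suc (cnt \<sigma>' (A - S) J))) y)
          + (\<Sum>S\<in>Pow A. GG ((cnt \<sigma>' S)(J := Suc (cnt \<sigma>' S J))) (cnt \<sigma>' (A - S)) y)" .
        show ?thesis unfolding R'_def sum.distrib X by (rule add.commute)
      qed
      finally show "mixed_deriv \<nu> Phi y = (\<Sum>S\<in>Pow {..<Suc k}. GG (cnt \<sigma> S) (cnt \<sigma> ({..<Suc k} - S)) y)"
        using md by simp
    qed
  qed
qed

end


theorem mainTheorem10: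
  fixes u :: "(nat \<Rightarrow> real) \<Rightarrow> 'x::real_normed_vector"
    and uhat :: 'x
    and Lv :: "'x \<Rightarrow> 'h1::real_inner"
    and Dt :: "'x \<Rightarrow> 'h3::real_normed_vector"
    and ET :: "'x \<Rightarrow> 'h2::real_inner"
    and f :: "'f::real_normed_vector"
    and beta1 alpha1 alpha2 :: real
    and b :: "nat \<Rightarrow> real"
  assumes Lv_lin: "linear Lv" and Dt_lin: "linear Dt"
    and X_norm: "\<And>v. norm v ^ 2 = norm (Lv v) ^ 2 + norm (Dt v) ^ 2"
    and ET_bl: "bounded_linear ET"
    and beta1_pos: "beta1 > 0"
    and b_nonneg: "\<And>j. b j \<ge> 0" and b_summable: "summable b"
    and alpha: "alpha1 \<ge> 0" "alpha2 \<ge> 0" "alpha1 + alpha2 > 0"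
    and u_smooth: "\<And>\<nu> j y. \<nu> \<in> Fidx \<Longrightarrow> y \<in> Upar \<Longrightarrow>
        ((\<lambda>h. mixed_deriv \<nu> u (y(j := y j + h))) has_vector_derivative
           mixed_deriv (\<nu>(j := Suc (\<nu> j))) u y)
        (at 0 within {h. y(j := y j + h) \<in> Upar})"
    and u_bound: "\<And>\<nu> y. \<nu> \<in> Fidx \<Longrightarrow> y \<in> Upar \<Longrightarrow>
        norm (mixed_deriv \<nu> u y) \<le> norm f / beta1 * fact (mi_abs \<nu>) * mi_pow b \<nu>"
  shows "\<forall>y\<in>Upar. \<forall>\<nu>\<in>Fidx.
    \<bar>mixed_deriv \<nu>
        (\<lambda>y'. alpha1 / 2 * norm (Lv (u y' - uhat)) ^ 2 + alpha2 / 2 * norm (ET (u y' - uhat)) ^ 2) y\<bar>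
    \<le> (alpha1 + alpha2 * (onorm ET) ^ 2) / 2 * (norm f / beta1 + norm uhat) ^ 2
       * fact (mi_abs \<nu> + 1) * mi_pow b \<nu>"
proof -
  have Lb: "norm (Lv v) \<le> norm v" for v
  proof (rule power2_le_imp_le)
    show "(norm (Lv v))\<^sup>2 \<le> (norm v)\<^sup>2" using X_norm[of v] by simp
  qed simp
  have Lv_bl: "bounded_linear Lv"
    by (rule bounded_linear_intro[where K=1]) (simp_all add: linear_add[OF Lv_lin] linear_scale[OF Lv_lin] Lb)
  interpret stp u uhat Lv ET alpha1 alpha2
    by (rule stp.intro[OF Lv_bl ET_bl u_smooth])
  define C where "C = norm f / beta1 + norm uhat"
  define K where "K = (alpha1 + alpha2 * (onorm ET) ^ 2) / 2"
  have K0: "K \<ge> 0" using alpha by (simp add: K_def)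
  have C0: "C \<ge> 0" using beta1_pos by (simp add: C_def)
  have pownn: "mi_pow b m \<ge> 0" for m
    unfolding mi_pow_def by (rule prod_nonneg) (simp add: b_nonneg)
  have Dbd: "norm (DD m y) \<le> C * fact (mi_abs m) * mi_pow b m" if m: "m \<in> Fidx" and y: "y \<in> Upar" for m y
  proof (cases "m = (\<lambda>_. 0)")
    case True
    have "norm (DD m y) = norm (u y - uhat)" using True by (simp add: DD_def md_zero)
    also have "\<dots> \<le> norm (u y) + norm uhat" by (rule norm_triangle_ineq4)
    also have "norm (u y) \<le> norm f / beta1"
      using u_bound[OF m y] True by (simp add: md_zero mi_abs_def mi_pow_def)
    finally show ?thesis using True by (simp add: C_def mi_abs_def mi_pow_def)
  next
    case False
    have "norm (DD m y) = norm (mixed_deriv m u y)" using False by (simp add: DD_def)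
    also have "\<dots> \<le> norm f / beta1 * fact (mi_abs m) * mi_pow b m" by (rule u_bound[OF m y])
    also have "\<dots> \<le> C * fact (mi_abs m) * mi_pow b m"
      by (intro mult_right_mono pownn) (auto simp: C_def)
    finally show ?thesis .
  qed
  have Gbd: "\<bar>GG m1 m2 y\<bar> \<le> K * norm (DD m1 y) * norm (DD m2 y)" for m1 m2 y
  proof -
    define p where "p = DD m1 y"
    define q where "q = DD m2 y"
    have e1: "\<bar>alpha1 / 2 * (Lv p \<bullet> Lv q)\<bar> \<le> alpha1 / 2 * (norm p * norm q)"
    proof -
      have "\<bar>Lv p \<bullet> Lv q\<bar> \<le> norm (Lv p) * norm (Lv q)" by (rule Cauchy_Schwarz_ineq2)
      also have "\<dots> \<le> norm p * norm q" by (intro mult_mono Lb) auto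
      finally show ?thesis using alpha by (simp add: abs_mult mult_left_mono)
    qed
    have e2: "\<bar>alpha2 / 2 * (ET p \<bullet> ET q)\<bar> \<le> alpha2 / 2 * ((onorm ET)\<^sup>2 * (norm p * norm q))"
    proof -
      have "\<bar>ET p \<bullet> ET q\<bar> \<le> norm (ET p) * norm (ET q)" by (rule Cauchy_Schwarz_ineq2)
      also have "\<dots> \<le> (onorm ET * norm p) * (onorm ET * norm q)"
        by (intro mult_mono onorm[OF ET_bl]) (auto intro: onorm_pos_le[OF ET_bl] mult_nonneg_nonneg)
      also have "\<dots> = (onorm ET)\<^sup>2 * (norm p * norm q)" by (simp add: power2_eq_square algebra_simps)
      finally show ?thesis using alpha by (simp add: abs_mult mult_left_mono)
    qed
    have "\<bar>GG m1 m2 y\<bar> \<le> \<bar>alpha1 / 2 * (Lv p \<bullet> Lv q)\<bar> + \<bar>alpha2 / 2 * (ET p \<bullet> ET q)\<bar>"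
      unfolding GG_def p_def q_def by (rule abs_triangle_ineq)
    also have "\<dots> \<le> alpha1 / 2 * (norm p * norm q) + alpha2 / 2 * ((onorm ET)\<^sup>2 * (norm p * norm q))"
      using e1 e2 by linarith
    also have "\<dots> = K * norm p * norm q" by (simp add: K_def algebra_simps)
    finally show ?thesis by (simp add: p_def q_def)
  qed
  show ?thesis
  proof (intro ballI)
    fix y \<nu> assume y: "y \<in> Upar" and nu: "\<nu> \<in> Fidx"
    define n where "n = mi_abs \<nu>"
    define A where "A = {..<n}"
    have fA: "finite A" and cA: "card A = n" by (simp_all add: A_def)
    obtain \<sigma> where s1: "cnt \<sigma> A = \<nu>"
      and s2: "mixed_deriv \<nu> Phi y = (\<Sum>S\<in>Pow A. GG (cnt \<sigma> S) (cnt \<sigma> (A - S)) y)"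
      using rep[of n] nu y unfolding A_def n_def by blast
    have tm: "\<bar>GG (cnt \<sigma> S) (cnt \<sigma> (A - S)) y\<bar>
        \<le> K * C\<^sup>2 * mi_pow b \<nu> * (fact (card S) * fact (n - card S))" if S: "S \<in> Pow A" for S
    proof -
      have fS: "finite S" and fAS: "finite (A - S)" and SA: "S \<subseteq> A" using S fA finite_subset by auto
      have cAS: "card (A - S) = n - card S" using card_Diff_subset[OF fS SA] cA by simp
      have pw: "mi_pow b (cnt \<sigma> S) * mi_pow b (cnt \<sigma> (A - S)) = mi_pow b \<nu>"
        unfolding s1[symmetric] cnt_pow[OF fS] cnt_pow[OF fAS] cnt_pow[OF fA]
        using prod.subset_diff[OF SA fA, of "\<lambda>i. b (\<sigma> i)"] by simp
      have "\<bar>GG (cnt \<sigma> S) (cnt \<sigma> (A - S)) y\<bar> \<le> K * norm (DD (cnt \<sigma> S) y) * norm (DD (cnt \<sigma> (A - S)) y)"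
        by (rule Gbd)
      also have "\<dots> \<le> K * (C * fact (mi_abs (cnt \<sigma> S)) * mi_pow b (cnt \<sigma> S))
                     * (C * fact (mi_abs (cnt \<sigma> (A - S))) * mi_pow b (cnt \<sigma> (A - S)))"
        by (intro mult_mono mult_left_mono Dbd cnt_Fidx fS fAS y K0 mult_nonneg_nonneg C0 pownn norm_ge_zero) auto
      also have "\<dots> = K * C\<^sup>2 * (mi_pow b (cnt \<sigma> S) * mi_pow b (cnt \<sigma> (A - S))) * (fact (card S) * fact (n - card S))"
        by (simp add: cnt_abs[OF fS] cnt_abs[OF fAS] cAS power2_eq_square algebra_simps)
      finally show ?thesis unfolding pw .
    qed
    have "\<bar>mixed_deriv \<nu> Phi y\<bar> \<le> (\<Sum>S\<in>Pow A. \<bar>GG (cnt \<sigma> S) (cnt \<sigma> (A - S)) y\<bar>)"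
      unfolding s2 by (rule sum_abs)
    also have "\<dots> \<le> (\<Sum>S\<in>Pow A. K * C\<^sup>2 * mi_pow b \<nu> * (fact (card S) * fact (n - card S)))"
      by (rule sum_mono) (rule tm)
    also have "\<dots> = K * C\<^sup>2 * mi_pow b \<nu> * (\<Sum>S\<in>Pow A. fact (card S) * fact (card A - card S))"
      by (simp add: sum_distrib_left cA)
    also have "\<dots> = K * C\<^sup>2 * mi_pow b \<nu> * fact (Suc n)"
      using sum_fact_pow[OF fA] cA by simp
    finally show "\<bar>mixed_deriv \<nu>
        (\<lambda>y'. alpha1 / 2 * norm (Lv (u y' - uhat)) ^ 2 + alpha2 / 2 * norm (ET (u y' - uhat)) ^ 2) y\<bar>
      \<le> (alpha1 + alpha2 * (onorm ET) ^ 2) / 2 * (norm f / beta1 + norm uhat) ^ 2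
       * fact (mi_abs \<nu> + 1) * mi_pow b \<nu>"
      unfolding Phi_def K_def C_def n_def by (simp add: algebra_simps)
  qed
qed


end
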